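(* Assume volume control with constants $\alpha,C_L,C_U$. Let $R\ge1$, let $\mathcal P$ be a covering of radius $R$ with overlap constant $b_\Gamma$, and let $\mathcal P'$ be a covering of radius $R'$ with $R'\le C_0R$ for some $C_0>0$. Let $u:A\to(0,\infty)$ be any positive function on a finite nonempty $A\subset\mathbb V$ (e.g. the landscape function). Then for every $E>0$, $$N_u^{\mathcal P,A}(E)\le(1+C_0)^\alpha C_\Gamma b_\Gamma\,N_u^{\mathcal P',A}(E),$$ where $C_\Gamma=2^\alpha C_U/C_L$.
   Context: $\Gamma=(\mathbb V,\mathcal E)$ is a connected simple unweighted graph with countably infinite vertex set, $d_0$ its shortest-path metric, $B(x,r)=\{y:d_0(x,y)\le r\}$. Volume control: $C_Lr^\alpha\le|B(x,r)|\le C_Ur^\alpha$ for all $x$, $r\ge1$, with $\alpha\ge1$. A covering of radius $R$ is a family $\mathcal P=\{B(z_i,R)\}_i$ with union $\mathbb V$; overlap constant $b$ means every point lies in at most $b$ of its balls. For finite $A$, $\mathcal P|_A=\{B\in\mathcal P:B\cap A\ne\emptyset\}$ and $N_u^{\mathcal P,A}(E)=|A|^{-1}\#\{B\in\mathcal P|_A:\min_{x\in B\cap A}1/u(x)\le E\}$. *)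

theory Defs
  imports Complex_Main "HOL-Library.Countable_Set"
begin

definition simple_graph :: "('a \<Rightarrow> 'a \<Rightarrow> bool) \<Rightarrow> bool" where
  "simple_graph G \<longleftrightarrow> (\<forall>x y. G x y \<longrightarrow> G y x) \<and> (\<forall>x. \<not> G x x)"

definition connected_graph :: "('a \<Rightarrow> 'a \<Rightarrow> bool) \<Rightarrow> bool" where
  "connected_graph G \<longleftrightarrow> (\<forall>x y. G\<^sup>*\<^sup>* x y)"

definition gdist :: "('a \<Rightarrow> 'a \<Rightarrow> bool) \<Rightarrow> 'a \<Rightarrow> 'a \<Rightarrow> nat" where
  "gdist G x y = (LEAST n. (G ^^ n) x y)"

definition gball :: "('a \<Rightarrow> 'a \<Rightarrow> bool) \<Rightarrow> 'a \<Rightarrow> real \<Rightarrow> 'a set" where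
  "gball G x r = {y. real (gdist G x y) \<le> r}"

definition volume_control :: "('a \<Rightarrow> 'a \<Rightarrow> bool) \<Rightarrow> real \<Rightarrow> real \<Rightarrow> real \<Rightarrow> bool" where
  "volume_control G \<alpha> CL CU \<longleftrightarrow>
     (\<forall>x. \<forall>r\<ge>1. finite (gball G x r) \<and>
        CL * r powr \<alpha> \<le> real (card (gball G x r)) \<and>
        real (card (gball G x r)) \<le> CU * r powr \<alpha>)"

definition is_covering :: "('a \<Rightarrow> 'a \<Rightarrow> bool) \<Rightarrow> real \<Rightarrow> 'a set set \<Rightarrow> bool" where
  "is_covering G R P \<longleftrightarrow> (\<forall>B\<in>P. \<exists>z. B = gball G z R) \<and> \<Union>P = UNIV"

definition overlap_bounded :: "'a set set \<Rightarrow> real \<Rightarrow> bool" where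
  "overlap_bounded P b \<longleftrightarrow> (\<forall>x. finite {B\<in>P. x \<in> B} \<and> real (card {B\<in>P. x \<in> B}) \<le> b)"

definition restrict_cover :: "'a set set \<Rightarrow> 'a set \<Rightarrow> 'a set set" where
  "restrict_cover P A = {B\<in>P. B \<inter> A \<noteq> {}}"

definition count_fn :: "('a \<Rightarrow> real) \<Rightarrow> 'a set set \<Rightarrow> 'a set \<Rightarrow> real \<Rightarrow> real" where
  "count_fn u P A E =
     real (card {B\<in>restrict_cover P A. Min ((\<lambda>x. 1 / u x) ` (B \<inter> A)) \<le> E}) / real (card A)"

end

theory Submission imports Defs begin

lemma relpow_sym:
  assumes "\<And>x y. G x y \<Longrightarrow> G y x"
  shows "(G ^^ n) x y \<Longrightarrow> (G ^^ n) y x"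
proof (induction n arbitrary: x y)
  case 0 then show ?case by simp
next
  case (Suc n)
  then obtain w where "(G ^^ n) x w" "G w y" by auto
  then have "(G ^^ n) w x" "G y w" using Suc.IH assms by auto
  then have "(G ^^ (1 + n)) y x" unfolding relpowp_add by auto
  then show ?case by simp
qed

lemma gdist_path:
  assumes "connected_graph G" shows "(G ^^ gdist G x y) x y"
proof -
  have "G\<^sup>*\<^sup>* x y" using assms unfolding connected_graph_def by simp
  then obtain n where "(G ^^ n) x y" using rtranclp_imp_relpowp by metis
  then show ?thesis unfolding gdist_def by (rule LeastI)
qed

lemma gdist_le: "(G ^^ n) x y \<Longrightarrow> gdist G x y \<le> n"
  unfolding gdist_def by (rule Least_le)

lemma gdist_refl: "gdist G x x = 0"
  using gdist_le[of 0 G x x] by simp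

lemma gdist_sym:
  assumes "simple_graph G" "connected_graph G"
  shows "gdist G x y = gdist G y x"
proof -
  have s: "\<And>x y. G x y \<Longrightarrow> G y x" using assms(1) unfolding simple_graph_def by simp
  have "gdist G y x \<le> gdist G x y"
    by (rule gdist_le[OF relpow_sym[OF s gdist_path[OF assms(2), of x y]]])
  moreover have "gdist G x y \<le> gdist G y x"
    by (rule gdist_le[OF relpow_sym[OF s gdist_path[OF assms(2), of y x]]])
  ultimately show ?thesis by simp
qed

lemma gdist_tri:
  assumes "connected_graph G"
  shows "gdist G x z \<le> gdist G x y + gdist G y z"
proof -
  have "(G ^^ (gdist G x y + gdist G y z)) x z"
    unfolding relpowp_add using gdist_path[OF assms, of x y] gdist_path[OF assms, of y z] by (rule relcomppI)
  then show ?thesis by (rule gdist_le)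
qed

lemma gdist_via:
  assumes "simple_graph G" "connected_graph G"
    and "real (gdist G z x) \<le> a" "real (gdist G w x) \<le> c" "real (gdist G w y) \<le> d"
  shows "real (gdist G z y) \<le> a + c + d"
proof -
  have "gdist G z y \<le> gdist G z x + gdist G x w + gdist G w y"
    using gdist_tri[OF assms(2), of z y x] gdist_tri[OF assms(2), of x y w] by linarith
  moreover have "gdist G x w = gdist G w x" using gdist_sym[OF assms(1,2)] by simp
  ultimately have "real (gdist G z y) \<le> real (gdist G z x) + real (gdist G w x) + real (gdist G w y)"
    by linarith
  then show ?thesis using assms(3-5) by linarith
qed

lemma ball_bound:
  assumes sg: "simple_graph G" and cg: "connected_graph G"
    and vc: "volume_control G \<alpha> CL CU" and "\<alpha> \<ge> 0"
    and R: "R \<ge> 1" and cov: "is_covering G R P" and ob: "overlap_bounded P b"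
    and R': "0 \<le> R'"
  shows "finite {B\<in>P. B \<inter> gball G z' R' \<noteq> {}}
    \<and> real (card {B\<in>P. B \<inter> gball G z' R' \<noteq> {}}) * (CL * R powr \<alpha>) \<le> b * (CU * (2*R+R') powr \<alpha>)"
proof -
  define T where "T = {B\<in>P. B \<inter> gball G z' R' \<noteq> {}}"
  define W where "W = gball G z' (2*R+R')"
  have W1: "2*R+R' \<ge> 1" using R R' by linarith
  have finW: "finite W" and cardW: "real (card W) \<le> CU * (2*R+R') powr \<alpha>"
    using vc W1 unfolding volume_control_def W_def by blast+
  have sub: "B \<subseteq> W" if "B \<in> T" for B
  proof
    fix y assume y: "y \<in> B"
    from that obtain z where Bz: "B = gball G z R" "B \<in> P" using cov unfolding T_def is_covering_def by blast
    from that obtain x where x: "x \<in> B" "x \<in> gball G z' R'" unfolding T_def by blast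
    have "real (gdist G z' y) \<le> R' + R + R"
      by (rule gdist_via[OF sg cg, of z' x R' z R y R]) (use x y Bz in \<open>auto simp: gball_def\<close>)
    then show "y \<in> W" unfolding W_def gball_def by simp
  qed
  have finT: "finite T" using finite_subset[of T "Pow W"] finW sub by auto
  have cardB: "CL * R powr \<alpha> \<le> real (card B)" if "B \<in> T" for B
  proof -
    from that obtain z where "B = gball G z R" using cov unfolding T_def is_covering_def by blast
    then show ?thesis using vc R unfolding volume_control_def by blast
  qed
  have b0: "0 \<le> b" using ob unfolding overlap_bounded_def by (meson of_nat_0_le_iff order_trans)
  have "real (card T) * (CL * R powr \<alpha>) = (\<Sum>B\<in>T. CL * R powr \<alpha>)" by simp
  also have "\<dots> \<le> (\<Sum>B\<in>T. real (card B))" by (rule sum_mono) (use cardB in auto)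
  also have "\<dots> = (\<Sum>B\<in>T. \<Sum>y\<in>W. if y \<in> B then 1 else 0)"
  proof (rule sum.cong[OF refl])
    fix B assume "B \<in> T"
    then have "W \<inter> B = B" using sub by auto
    then show "real (card B) = (\<Sum>y\<in>W. if y \<in> B then 1 else 0)"
      using sum.inter_restrict[OF finW, of "\<lambda>_. (1::real)" B] by simp
  qed
  also have "\<dots> = (\<Sum>y\<in>W. \<Sum>B\<in>T. if y \<in> B then 1 else 0)" by (rule sum.swap)
  also have "\<dots> = (\<Sum>y\<in>W. real (card {B\<in>T. y \<in> B}))"
  proof (rule sum.cong[OF refl])
    fix y
    have "(\<Sum>B\<in>T. if y \<in> B then 1 else (0::real)) = (\<Sum>B\<in>T \<inter> {B. y \<in> B}. 1)"
      using sum.inter_restrict[OF finT, of "\<lambda>_. (1::real)" "{B. y \<in> B}"] by simp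
    also have "T \<inter> {B. y \<in> B} = {B\<in>T. y \<in> B}" by auto
    finally show "(\<Sum>B\<in>T. if y \<in> B then 1 else (0::real)) = real (card {B\<in>T. y \<in> B})" by simp
  qed
  also have "\<dots> \<le> (\<Sum>y\<in>W. b)"
  proof (rule sum_mono)
    fix y
    have "finite {B\<in>P. y \<in> B}" "real (card {B\<in>P. y \<in> B}) \<le> b"
      using ob unfolding overlap_bounded_def by auto
    moreover have "{B\<in>T. y \<in> B} \<subseteq> {B\<in>P. y \<in> B}" unfolding T_def by auto
    ultimately have "card {B\<in>T. y \<in> B} \<le> card {B\<in>P. y \<in> B}" by (simp add: card_mono)
    then show "real (card {B\<in>T. y \<in> B}) \<le> b" using \<open>real (card {B\<in>P. y \<in> B}) \<le> b\<close> by linarith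
  qed
  also have "\<dots> = b * real (card W)" by simp
  also have "\<dots> \<le> b * (CU * (2*R+R') powr \<alpha>)" using b0 cardW by (rule mult_left_mono[rotated])
  finally show ?thesis using finT unfolding T_def by simp
qed

lemma count_set:
  assumes "finite A"
  shows "{B\<in>restrict_cover P A. Min ((\<lambda>x. 1 / u x) ` (B \<inter> A)) \<le> E}
       = {B\<in>P. B \<inter> {x\<in>A. 1 / u x \<le> E} \<noteq> {}}"
proof -
  have "Min ((\<lambda>x. 1 / u x) ` (B \<inter> A)) \<le> E \<longleftrightarrow> (\<exists>x\<in>B \<inter> A. 1 / u x \<le> E)"
    if "B \<inter> A \<noteq> {}" for B
    using that assms by (subst Min_le_iff) auto
  then show ?thesis unfolding restrict_cover_def by auto
qed

theorem lemma2p3: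
  fixes G :: "'a \<Rightarrow> 'a \<Rightarrow> bool"
    and \<alpha> CL CU R R' C0 b E :: real
    and P P' :: "'a set set"
    and u :: "'a \<Rightarrow> real"
    and A :: "'a set"
  assumes "simple_graph G" and "connected_graph G"
    and "countable (UNIV :: 'a set)" and "infinite (UNIV :: 'a set)"
    and "\<alpha> \<ge> 1" and "CL > 0" and "CU > 0"
    and "volume_control G \<alpha> CL CU"
    and "R \<ge> 1"
    and "is_covering G R P" and "overlap_bounded P b"
    and "is_covering G R' P'" and "C0 > 0" and "R' \<le> C0 * R"
    and "finite A" and "A \<noteq> {}" and "\<forall>x\<in>A. u x > 0"
    and "E > 0"
  shows "count_fn u P A E \<le> (1 + C0) powr \<alpha> * (2 powr \<alpha> * CU / CL) * b * count_fn u P' A E"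
proof -
  note sg = assms(1) and cg = assms(2)
  have cb: "\<exists>z. B = gball G z R'" if "B \<in> P'" for B
    using assms(12) that unfolding is_covering_def by blast
  have cu: "\<exists>B\<in>P'. x \<in> B" for x
  proof -
    have "x \<in> \<Union>P'" using assms(12) unfolding is_covering_def by simp
    then show ?thesis by blast
  qed
  define S where "S = {x\<in>A. 1 / u x \<le> E}"
  define Q where "Q = {B\<in>P. B \<inter> S \<noteq> {}}"
  define Q' where "Q' = {B\<in>P'. B \<inter> S \<noteq> {}}"
  define M where "M = (1 + C0) powr \<alpha> * (2 powr \<alpha> * CU / CL) * b"
  have cQ: "count_fn u P A E = real (card Q) / real (card A)"
    unfolding count_fn_def Q_def S_def count_set[OF assms(15)] ..
  have cQ': "count_fn u P' A E = real (card Q') / real (card A)"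
    unfolding count_fn_def Q'_def S_def count_set[OF assms(15)] ..
  have a0: "\<alpha> \<ge> 0" using assms(5) by linarith
  have R'0: "0 \<le> R'"
  proof -
    obtain x :: 'a where True by simp
    then obtain B' where "B' \<in> P'" "x \<in> B'" using cu by blast
    then obtain z' where "B' = gball G z' R'" using cb by blast
    with \<open>x \<in> B'\<close> have "real (gdist G z' x) \<le> R'" unfolding gball_def by simp
    then show ?thesis by (meson of_nat_0_le_iff order_trans)
  qed
  have finS: "finite S" using assms(15) unfolding S_def by simp
  have finQ': "finite Q'"
  proof -
    define U where "U = (\<Union>x\<in>S. gball G x (2*R'+1))"
    have "finite U" unfolding U_def
    proof (rule finite_UN_I[OF finS])
      fix x show "finite (gball G x (2*R'+1))"
        using assms(8) R'0 unfolding volume_control_def by simp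
    qed
    moreover have "Q' \<subseteq> Pow U"
    proof
      fix B' assume "B' \<in> Q'"
      then obtain z' x where B': "B' = gball G z' R'" "x \<in> B'" "x \<in> S"
        using cb unfolding Q'_def by blast
      have "B' \<subseteq> gball G x (2*R'+1)"
      proof
        fix y assume y: "y \<in> B'"
        have "real (gdist G x y) \<le> 0 + R' + R'"
          by (rule gdist_via[OF sg cg, of x x 0 z' R' y R']) (use B' y in \<open>auto simp: gball_def gdist_refl\<close>)
        then show "y \<in> gball G x (2*R'+1)" unfolding gball_def by simp
      qed
      then show "B' \<in> Pow U" unfolding U_def using B' by blast
    qed
    ultimately show ?thesis by (meson finite_Pow_iff finite_subset)
  qed
  define T where "T = (\<lambda>B'. {B\<in>P. B \<inter> B' \<noteq> {}})"
  have Tb: "finite (T B') \<and> real (card (T B')) \<le> M" if B'Q: "B' \<in> Q'" for B'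
  proof -
    obtain z' where B': "B' = gball G z' R'" using B'Q cb unfolding Q'_def by blast
    have bb: "finite (T B') \<and> real (card (T B')) * (CL * R powr \<alpha>) \<le> b * (CU * (2*R+R') powr \<alpha>)"
      using ball_bound[OF sg cg assms(8) a0 assms(9) assms(10) assms(11) R'0, of z'] unfolding T_def B' .
    have b0: "0 \<le> b" using assms(11) unfolding overlap_bounded_def by (meson of_nat_0_le_iff order_trans)
    have Rp: "R powr \<alpha> > 0" using assms(9) by simp
    have "(2*R+R') powr \<alpha> \<le> (2*(1+C0)*R) powr \<alpha>"
    proof (rule powr_mono2[OF a0])
      show "0 \<le> 2*R+R'" using R'0 assms(9) by linarith
      have "C0*R > 0" using assms(9,13) by simp
      moreover have "2*(1+C0)*R = 2*R + 2*(C0*R)" by (simp add: algebra_simps)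
      ultimately show "2*R+R' \<le> 2*(1+C0)*R" using assms(14) by linarith
    qed
    also have "\<dots> = 2 powr \<alpha> * (1+C0) powr \<alpha> * R powr \<alpha>"
      using powr_mult[of "2*(1+C0)" R \<alpha>] powr_mult[of 2 "1+C0" \<alpha>] assms(9,13) by simp
    finally have p: "(2*R+R') powr \<alpha> \<le> 2 powr \<alpha> * (1+C0) powr \<alpha> * R powr \<alpha>" .
    have "b * (CU * (2*R+R') powr \<alpha>) \<le> b * (CU * (2 powr \<alpha> * (1+C0) powr \<alpha> * R powr \<alpha>))"
      using p b0 assms(7) by (simp add: mult_left_mono)
    also have "\<dots> = M * (CL * R powr \<alpha>)" unfolding M_def using assms(6) by (simp add: divide_simps ac_simps)
    finally have "real (card (T B')) * (CL * R powr \<alpha>) \<le> M * (CL * R powr \<alpha>)" using bb by linarith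
    then have "real (card (T B')) \<le> M" using Rp assms(6) by (simp add: mult_le_cancel_right)
    then show ?thesis using bb by simp
  qed
  have QU: "Q \<subseteq> (\<Union>B'\<in>Q'. T B')"
  proof
    fix B assume "B \<in> Q"
    then obtain x where x: "x \<in> B" "x \<in> S" "B \<in> P" unfolding Q_def by blast
    then obtain B' where "B' \<in> P'" "x \<in> B'" using cu by blast
    then show "B \<in> (\<Union>B'\<in>Q'. T B')" using x unfolding Q'_def T_def by blast
  qed
  have "card Q \<le> card (\<Union>B'\<in>Q'. T B')"
    by (rule card_mono[OF _ QU]) (use finQ' Tb in auto)
  also have "\<dots> \<le> (\<Sum>B'\<in>Q'. card (T B'))" by (rule card_UN_le[OF finQ'])
  finally have "real (card Q) \<le> (\<Sum>B'\<in>Q'. real (card (T B')))" by (simp flip: of_nat_sum)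
  also have "\<dots> \<le> (\<Sum>B'\<in>Q'. M)" by (rule sum_mono) (use Tb in auto)
  also have "\<dots> = M * real (card Q')" by simp
  finally have main: "real (card Q) \<le> M * real (card Q')" .
  have cA: "real (card A) > 0" using assms(15,16) by (simp add: card_gt_0_iff)
  have "real (card Q) / real (card A) \<le> M * real (card Q') / real (card A)"
    using main cA by (simp add: divide_right_mono)
  then show ?thesis unfolding cQ cQ' M_def by simp
qed

end
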